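(* In the setting of the context (FSR scheme with direct flux reconstruction), let $\mathcal{E}_j=(\Phi_{j+1/2}-\Phi_{j-1/2})/h$ evaluated on exact nodal values. If $\kappa_3=\kappa-1$, then for arbitrary $\theta,\theta_3$, as $h\to0$ with derivatives at $x_j$, $$\mathcal{E}_j=\frac{\partial f}{\partial x}+\frac{3\theta-1}{12}\frac{\partial^3 f}{\partial x^3}h^2+\frac{15(\theta-\theta_3)-13}{240}\frac{\partial^5 f}{\partial x^5}h^4+\frac{\kappa-1}{32}\left[\frac{\partial D}{\partial x}\frac{\partial^5 u}{\partial x^5}+D(u(x_j))\frac{\partial^6 u}{\partial x^6}\right]h^5+O(h^6),$$ where $f$ denotes $f(u(x))$ and $\partial D/\partial x=\frac{d}{dx}D(u(x))$. In particular, with $\theta=1/3$ and $\theta_3=-8/15$ the scheme is fifth-order accurate, and sixth-order accurate if $D\equiv0$.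
   Context: Let $h>0$, uniform grid $x_i=ih$, $i\in\mathbb{Z}$. Let $u$ be a smooth real function of $x$, $u_i=u(x_i)$; let $f$ (flux) and $D$ (dissipation coefficient) be smooth real functions of one variable; $f_i=f(u_i)$. For nodal values $g_i$ define successive central differences $(g_x)_i=(g_{i+1}-g_{i-1})/(2h)$, $(g_{xx})_i=((g_x)_{i+1}-(g_x)_{i-1})/(2h)$, and for the face $i+1/2$ with $j=i$, $k=i+1$, define $T_j[g]=\frac h4((g_x)_k-(g_x)_j)-\frac{h^2}{4}(g_{xx})_j$, $T_k[g]=\frac h4((g_x)_k-(g_x)_j)-\frac{h^2}{4}(g_{xx})_k$. Reconstructed solution states (parameters $\kappa,\kappa_3$): $u_L=\kappa\frac{u_j+u_k}{2}+(1-\kappa)[u_j+\frac h2(u_x)_j]+\kappa_3T_j[u]$, $u_R=\kappa\frac{u_j+u_k}{2}+(1-\kappa)[u_k-\frac h2(u_x)_k]+\kappa_3T_k[u]$. Reconstructed fluxes (parameters $\theta,\theta_3$): $f_L=\theta\frac{f_j+f_k}{2}+(1-\theta)[f_j+\frac h2(f_x)_j]+\theta_3T_j[f]$, $f_R=\theta\frac{f_j+f_k}{2}+(1-\theta)[f_k-\frac h2(f_x)_k]+\theta_3T_k[f]$. Numerical flux: $\Phi_{i+1/2}=\frac12(f_L+f_R)-\frac12D_{i+1/2}(u_R-u_L)$, with $D_{i+1/2}=\bar D(u_i,u_{i+1})$ for a smooth symmetric $\bar D$ with $\bar D(v,v)=D(v)$. *)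

theory Defs
  imports "HOL-Analysis.Analysis" "HOL-Library.Landau_Symbols"
begin

definition smooth1 :: "(real \<Rightarrow> real) \<Rightarrow> bool" where
  "smooth1 g \<longleftrightarrow> (\<forall>k x. ((deriv ^^ k) g) differentiable (at x))"

fun Ck2 :: "nat \<Rightarrow> (real \<times> real \<Rightarrow> real) \<Rightarrow> bool" where
  "Ck2 0 g = continuous_on UNIV g"
| "Ck2 (Suc k) g = (\<exists>g1 g2. (\<forall>p. (g has_derivative (\<lambda>v. fst v * g1 p + snd v * g2 p)) (at p))
                      \<and> Ck2 k g1 \<and> Ck2 k g2)"

definition smooth2 :: "(real \<Rightarrow> real \<Rightarrow> real) \<Rightarrow> bool" where
  "smooth2 g \<longleftrightarrow> (\<forall>k. Ck2 k (\<lambda>p. g (fst p) (snd p)))"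

definition cdx :: "real \<Rightarrow> (int \<Rightarrow> real) \<Rightarrow> int \<Rightarrow> real" where
  "cdx h g i = (g (i + 1) - g (i - 1)) / (2 * h)"

definition cdxx :: "real \<Rightarrow> (int \<Rightarrow> real) \<Rightarrow> int \<Rightarrow> real" where
  "cdxx h g i = (cdx h g (i + 1) - cdx h g (i - 1)) / (2 * h)"

(* face i+1/2 with j = i, k = i+1 *)
definition Tj :: "real \<Rightarrow> (int \<Rightarrow> real) \<Rightarrow> int \<Rightarrow> real" where
  "Tj h g i = h / 4 * (cdx h g (i + 1) - cdx h g i) - h^2 / 4 * cdxx h g i"

definition Tk :: "real \<Rightarrow> (int \<Rightarrow> real) \<Rightarrow> int \<Rightarrow> real" where
  "Tk h g i = h / 4 * (cdx h g (i + 1) - cdx h g i) - h^2 / 4 * cdxx h g (i + 1)"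

(* left/right reconstructed states at face i+1/2, parameters a (= kappa or theta), a3 *)
definition recL :: "real \<Rightarrow> real \<Rightarrow> real \<Rightarrow> (int \<Rightarrow> real) \<Rightarrow> int \<Rightarrow> real" where
  "recL h a a3 g i = a * (g i + g (i + 1)) / 2 + (1 - a) * (g i + h / 2 * cdx h g i) + a3 * Tj h g i"

definition recR :: "real \<Rightarrow> real \<Rightarrow> real \<Rightarrow> (int \<Rightarrow> real) \<Rightarrow> int \<Rightarrow> real" where
  "recR h a a3 g i = a * (g i + g (i + 1)) / 2 + (1 - a) * (g (i + 1) - h / 2 * cdx h g (i + 1)) + a3 * Tk h g i"

definition numflux :: "real \<Rightarrow> real \<Rightarrow> real \<Rightarrow> real \<Rightarrow> real \<Rightarrow> (real \<Rightarrow> real)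
    \<Rightarrow> (real \<Rightarrow> real \<Rightarrow> real) \<Rightarrow> (int \<Rightarrow> real) \<Rightarrow> int \<Rightarrow> real" where
  "numflux h \<kappa> \<kappa>3 \<theta> \<theta>3 f Dbar U i =
     (recL h \<theta> \<theta>3 (\<lambda>m. f (U m)) i + recR h \<theta> \<theta>3 (\<lambda>m. f (U m)) i) / 2
     - Dbar (U i) (U (i + 1)) * (recR h \<kappa> \<kappa>3 U i - recL h \<kappa> \<kappa>3 U i) / 2"

(* truncation quantity E_j = (Phi_{j+1/2} - Phi_{j-1/2})/h on exact nodal values,
   for the grid with node x_j = x and spacing h, i.e. node j+m is at x + m h *)
definition schemeE :: "real \<Rightarrow> real \<Rightarrow> real \<Rightarrow> real \<Rightarrow> (real \<Rightarrow> real)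
    \<Rightarrow> (real \<Rightarrow> real \<Rightarrow> real) \<Rightarrow> (real \<Rightarrow> real) \<Rightarrow> real \<Rightarrow> real \<Rightarrow> real" where
  "schemeE \<kappa> \<kappa>3 \<theta> \<theta>3 f Dbar u x h =
     (let U = (\<lambda>m::int. u (x + of_int m * h)) in
      (numflux h \<kappa> \<kappa>3 \<theta> \<theta>3 f Dbar U 0 - numflux h \<kappa> \<kappa>3 \<theta> \<theta>3 f Dbar U (-1)) / h)"

end

theory Submission
  imports Defs
begin

lemma hcdx: "h \<noteq> 0 \<Longrightarrow> h / 2 * cdx h g i = (g (i+1) - g (i - 1)) / 4"
  unfolding cdx_def by (simp add: field_simps)

lemma Tj_eq: "h \<noteq> 0 \<Longrightarrow> Tj h g i = (g (i+2) - g i - g (i+1) + g (i - 1))/8 - (g (i+2) - 2*g i + g (i - 2))/16"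
  unfolding Tj_def cdxx_def cdx_def by (simp add: field_simps power2_eq_square)

lemma Tk_eq: "h \<noteq> 0 \<Longrightarrow> Tk h g i = (g (i+2) - g i - g (i+1) + g (i - 1))/8 - (g (i+3) - 2*g (i+1) + g (i - 1))/16"
  unfolding Tk_def cdxx_def cdx_def by (simp add: field_simps power2_eq_square)

lemma recL_eq: assumes "h \<noteq> 0" shows "recL h a a3 g i = a * (g i + g (i + 1)) / 2 + (1 - a) * (g i + (g (i+1) - g (i - 1)) / 4)
   + a3 * ((g (i+2) - g i - g (i+1) + g (i - 1))/8 - (g (i+2) - 2*g i + g (i - 2))/16)"
  by (simp only: recL_def hcdx[OF assms] Tj_eq[OF assms])

lemma recR_eq: assumes "h \<noteq> 0" shows "recR h a a3 g i = a * (g i + g (i + 1)) / 2 + (1 - a) * (g (i + 1) - (g (i+2) - g i) / 4)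
   + a3 * ((g (i+2) - g i - g (i+1) + g (i - 1))/8 - (g (i+3) - 2*g (i+1) + g (i - 1))/16)"
  using hcdx[OF assms, of g "i+1"] by (simp only: recR_def Tk_eq[OF assms] add.assoc one_add_one add_diff_cancel_right') 

lemma schemeE_eq:
  fixes h :: real
  assumes "h \<noteq> 0"
  shows "schemeE \<kappa> (\<kappa> - 1) \<theta> \<theta>3 f Dbar u x h =
   ( \<theta>3*(-1/32)*(f (u (x + 3*h)) - f (u (x + (-3)*h)))
    + (\<theta>+\<theta>3-1)/8*(f (u (x + 2*h)) - f (u (x + (-2)*h)))
    + (3/4 - \<theta>/4 - 5*\<theta>3/32)*(f (u (x + 1*h)) - f (u (x + (-1)*h)))) / h
   - (Dbar (u x) (u (x + h)) * ((1-\<kappa>)*(-u (x + (-2)*h)/16 + 5*u (x + (-1)*h)/16 - 5*u (x + 0*h)/8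
        + 5*u (x + 1*h)/8 - 5*u (x + 2*h)/16 + u (x + 3*h)/16))
      - Dbar (u (x - h)) (u x) * ((1-\<kappa>)*(-u (x + (-3)*h)/16 + 5*u (x + (-2)*h)/16 - 5*u (x + (-1)*h)/8
        + 5*u (x + 0*h)/8 - 5*u (x + 1*h)/16 + u (x + 2*h)/16))) / (2*h)"
proof -
  have e: "(A - B) / h = C / h - E / (2*h) \<longleftrightarrow> A - B = C - E/2" for A B C E :: real
  proof -
    have "C / h - E / (2*h) = (C - E/2)/h" using assms by (simp add: field_simps)
    then show ?thesis using assms by simp
  qed
  show ?thesis
  unfolding schemeE_def numflux_def Let_def e
  using assms
  apply (simp add: recL_eq recR_eq)
  apply (simp add: field_simps)
  done
qed

lemma smooth1_D:
  assumes "smooth1 g"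
  shows "((deriv^^k) g has_real_derivative (deriv^^(Suc k)) g y) (at y)"
  using assms unfolding smooth1_def by (simp add: DERIV_deriv_iff_real_differentiable)

definition tay :: "(real \<Rightarrow> real) \<Rightarrow> real \<Rightarrow> nat \<Rightarrow> real \<Rightarrow> real" where
  "tay g c n t = (\<Sum>k<n. (deriv^^k) g c / fact k * t^k)"

lemma ev_small: "eventually (\<lambda>h::real. 0 < h \<and> h < 1) (at_right 0)"
  unfolding eventually_at_right[OF zero_less_one] by (rule exI[of _ 1]) auto

lemma taylor_bigo:
  assumes "smooth1 g"
  shows "(\<lambda>h. g (c + a*h) - tay g c n (a*h)) \<in> O[at_right 0](\<lambda>h. h^n)"
proof -
  let ?d = "\<lambda>m t. (deriv^^m) g (c + t)"
  have D: "\<forall>m t. DERIV (?d m) t :> ?d (Suc m) t"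
  proof (intro allI)
    fix m t
    have "((\<lambda>t. c + t) has_real_derivative 1) (at t)"
      by (auto intro!: derivative_eq_intros)
    from DERIV_chain2[OF smooth1_D[OF assms] this] show "DERIV (?d m) t :> ?d (Suc m) t" by simp
  qed
  have cont: "continuous_on (cball c \<bar>a\<bar>) ((deriv^^n) g)"
    using smooth1_D[OF assms, of n] 
    by (meson DERIV_isCont continuous_at_imp_continuous_on)
  have "bounded ((deriv^^n) g ` cball c \<bar>a\<bar>)"
    by (rule compact_imp_bounded[OF compact_continuous_image[OF cont compact_cball]])
  then obtain B where B: "\<And>y. y \<in> cball c \<bar>a\<bar> \<Longrightarrow> \<bar>(deriv^^n) g y\<bar> \<le> B"
    unfolding bounded_iff by (auto simp del: mem_cball)
  show ?thesis
  proof (rule bigoI[where c = "B * \<bar>a\<bar>^n / fact n"])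
    show "\<forall>\<^sub>F h in at_right 0. norm (g (c + a*h) - tay g c n (a*h)) \<le> B * \<bar>a\<bar>^n / fact n * norm (h^n)"
      using ev_small
    proof eventually_elim
      case (elim h)
      from Maclaurin_all_le[of ?d "\<lambda>t. g (c + t)", OF _ D, of "a*h" n]
      obtain t where t: "\<bar>t\<bar> \<le> \<bar>a*h\<bar>"
        and eq: "g (c + a*h) = (\<Sum>m<n. ?d m 0 / fact m * (a*h) ^ m) + ?d n t / fact n * (a*h) ^ n"
        by auto
      have "\<bar>a\<bar> * h \<le> \<bar>a\<bar>" using elim by (simp add: mult_left_le)
      then have "\<bar>t\<bar> \<le> \<bar>a\<bar>" using t elim by (simp add: abs_mult)
      then have "c + t \<in> cball c \<bar>a\<bar>" by (simp add: dist_real_def)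
      then have Bt: "\<bar>?d n t\<bar> \<le> B" using B by simp
      have "g (c + a*h) - tay g c n (a*h) = ?d n t / fact n * (a*h) ^ n"
        using eq by (simp add: tay_def)
      also have "\<bar>\<dots>\<bar> = \<bar>?d n t\<bar> * \<bar>a\<bar>^n / fact n * h^n"
        using elim by (simp add: abs_mult power_mult_distrib power_abs)
      also have "\<dots> \<le> B * \<bar>a\<bar>^n / fact n * h^n"
        using Bt elim by (intro mult_right_mono divide_right_mono) auto
      finally show ?case using elim by simp
    qed
  qed
qed

definition Cd :: "(real \<Rightarrow> real) \<Rightarrow> nat \<Rightarrow> bool" where
  "Cd g k \<longleftrightarrow> (\<forall>j\<le>k. \<forall>y. (deriv^^j) g differentiable at y)"

lemma deriv_funpow_Suc: "(deriv^^(Suc j)) g = (deriv^^j) (deriv g)"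
  by (simp add: funpow_Suc_right del: funpow.simps)

lemma Cd_0: "Cd g 0 \<longleftrightarrow> (\<forall>y. g differentiable at y)"
  unfolding Cd_def by simp

lemma Cd_Suc: "Cd g (Suc k) \<longleftrightarrow> (\<forall>y. g differentiable at y) \<and> Cd (deriv g) k"
  unfolding Cd_def
proof safe
  fix j y assume "\<forall>j\<le>Suc k. \<forall>y. (deriv ^^ j) g differentiable at y" "j \<le> k"
  then show "(deriv ^^ j) (deriv g) differentiable at y"
    by (metis Suc_le_mono deriv_funpow_Suc)
next
  fix y assume "\<forall>j\<le>Suc k. \<forall>y. (deriv ^^ j) g differentiable at y"
  then show "g differentiable at y" by (metis funpow_0 le0)
next
  fix j y assume "\<forall>y. g differentiable at y" "\<forall>j\<le>k. \<forall>y. (deriv ^^ j) (deriv g) differentiable at y" "j \<le> Suc k"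
  then show "(deriv ^^ j) g differentiable at y"
    by (cases j) (auto simp: deriv_funpow_Suc simp del: funpow.simps)
qed

lemma Cd_mono: "Cd g (Suc k) \<Longrightarrow> Cd g k"
  unfolding Cd_def by auto

lemma smooth1_Cd: "smooth1 g \<longleftrightarrow> (\<forall>k. Cd g k)"
  unfolding smooth1_def Cd_def by auto

lemma deriv_ext_add: fixes a b :: "real \<Rightarrow> real"
  assumes "\<And>y. a differentiable at y" "\<And>y. b differentiable at y"
  shows "deriv (\<lambda>y. a y + b y) = (\<lambda>y. deriv a y + deriv b y)"
proof
  fix y
  show "deriv (\<lambda>y. a y + b y) y = deriv a y + deriv b y"
  proof -
    have da: "(a has_real_derivative deriv a y) (at y)" using assms(1)[of y] DERIV_deriv_iff_real_differentiable by blast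
    have db: "(b has_real_derivative deriv b y) (at y)" using assms(2)[of y] DERIV_deriv_iff_real_differentiable by blast
    show ?thesis using DERIV_imp_deriv[OF DERIV_add[OF da db]] by simp
  qed
qed

lemma deriv_ext_mult: fixes a b :: "real \<Rightarrow> real"
  assumes "\<And>y. a differentiable at y" "\<And>y. b differentiable at y"
  shows "deriv (\<lambda>y. a y * b y) = (\<lambda>y. deriv a y * b y + a y * deriv b y)"
proof
  fix y
  show "deriv (\<lambda>y. a y * b y) y = deriv a y * b y + a y * deriv b y"
  proof -
    have da: "(a has_real_derivative deriv a y) (at y)" using assms(1)[of y] DERIV_deriv_iff_real_differentiable by blast
    have db: "(b has_real_derivative deriv b y) (at y)" using assms(2)[of y] DERIV_deriv_iff_real_differentiable by blast
    show ?thesis using DERIV_imp_deriv[OF DERIV_mult[OF da db]] by (simp add: mult.commute)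
  qed
qed

lemma deriv_ext_comp: fixes f u :: "real \<Rightarrow> real"
  assumes "\<And>y. f differentiable at y" "\<And>y. u differentiable at y"
  shows "deriv (\<lambda>y. f (u y)) = (\<lambda>y. deriv f (u y) * deriv u y)"
proof
  fix y
  show "deriv (\<lambda>y. f (u y)) y = deriv f (u y) * deriv u y"
  proof -
    have da: "(f has_real_derivative deriv f (u y)) (at (u y))" using assms(1)[of "u y"] DERIV_deriv_iff_real_differentiable by blast
    have db: "(u has_real_derivative deriv u y) (at y)" using assms(2)[of y] DERIV_deriv_iff_real_differentiable by blast
    show ?thesis using DERIV_imp_deriv[OF DERIV_chain2[OF da db]] by simp
  qed
qed

lemma Cd_add: "Cd a k \<Longrightarrow> Cd b k \<Longrightarrow> Cd (\<lambda>y. a y + b y) k"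
proof (induction k arbitrary: a b)
  case 0 then show ?case by (auto simp: Cd_0)
next
  case (Suc k)
  have da: "\<And>y. a differentiable at y" and db: "\<And>y. b differentiable at y"
    using Suc.prems by (auto simp: Cd_Suc)
  have "Cd (deriv (\<lambda>y. a y + b y)) k"
    unfolding deriv_ext_add[OF da db] using Suc.prems by (auto simp: Cd_Suc intro!: Suc.IH)
  then show ?case using da db by (auto simp: Cd_Suc)
qed

lemma Cd_mult: "Cd a k \<Longrightarrow> Cd b k \<Longrightarrow> Cd (\<lambda>y. a y * b y) k"
proof (induction k arbitrary: a b)
  case 0 then show ?case by (auto simp: Cd_0)
next
  case (Suc k)
  have da: "\<And>y. a differentiable at y" and db: "\<And>y. b differentiable at y"
    using Suc.prems by (auto simp: Cd_Suc)
  have ak: "Cd a k" and bk: "Cd b k" using Suc.prems Cd_mono by blast+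
  have "Cd (\<lambda>y. deriv a y * b y) k" "Cd (\<lambda>y. a y * deriv b y) k"
    using Suc.prems ak bk by (auto intro!: Suc.IH simp: Cd_Suc)
  then show ?case using da db unfolding Cd_Suc deriv_ext_mult[OF da db] by (auto intro!: Cd_add)
qed

lemma Cd_comp: "Cd f k \<Longrightarrow> Cd u k \<Longrightarrow> Cd (\<lambda>y. f (u y)) k"
proof (induction k arbitrary: f u)
  case 0 
  have "(\<lambda>y. f (u y)) differentiable at y" for y
    using differentiable_chain_at[of u y f] 0 by (simp add: Cd_0 o_def)
  then show ?case by (simp add: Cd_0)
next
  case (Suc k)
  have df: "\<And>y. f differentiable at y" and du: "\<And>y. u differentiable at y"
    using Suc.prems by (simp_all add: Cd_Suc)
  have uk: "Cd u k" using Suc.prems Cd_mono by blast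
  have fk: "Cd (deriv f) k" using Suc.prems by (simp add: Cd_Suc)
  have "Cd (\<lambda>y. deriv f (u y)) k"
    using Suc.IH[OF fk uk] .
  moreover have "Cd (deriv u) k" using Suc.prems by (simp add: Cd_Suc)
  ultimately have "Cd (deriv (\<lambda>y. f (u y))) k"  
    unfolding deriv_ext_comp[OF df du] by (rule Cd_mult)
  moreover have "(\<lambda>y. f (u y)) differentiable at y" for y
    using differentiable_chain_at[of u y f] df du by (simp add: o_def)
  ultimately show ?case by (simp add: Cd_Suc)
qed

lemma smooth1_comp: "smooth1 f \<Longrightarrow> smooth1 u \<Longrightarrow> smooth1 (\<lambda>y. f (u y))"
  by (simp add: smooth1_Cd Cd_comp)

lemma tay7: "tay g c 7 t = g c + (deriv^^1) g c * t + (deriv^^2) g c / 2 * t^2 + (deriv^^3) g c / 6 * t^3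
   + (deriv^^4) g c / 24 * t^4 + (deriv^^5) g c / 120 * t^5 + (deriv^^6) g c / 720 * t^6"
  unfolding tay_def by (simp add: eval_nat_numeral fact_Suc del: funpow.simps)

lemma pow_bo: "m \<le> n \<Longrightarrow> (\<lambda>h::real. h^n) \<in> O[at_right 0](\<lambda>h. h^m)"
  apply (rule bigoI[where c=1])
  using ev_small by eventually_elim (auto intro: power_decreasing)

lemma bo_mono: "f \<in> O[at_right 0](\<lambda>h::real. h^n) \<Longrightarrow> m \<le> n \<Longrightarrow> f \<in> O[at_right 0](\<lambda>h. h^m)"
  using landau_o.big_trans pow_bo by blast

lemma bo_mult: "f \<in> O[F](\<lambda>h::real. h^a) \<Longrightarrow> g \<in> O[F](\<lambda>h. h^b) \<Longrightarrow> (\<lambda>x. f x * g x) \<in> O[F](\<lambda>h. h^(a+b))"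
  using landau_o.big.mult[of f F "\<lambda>h. h^a" g "\<lambda>h. h^b"] by (simp add: power_add)

lemma mono_bo: "(\<lambda>h::real. c * h^k) \<in> O[F](\<lambda>h. h^k)"
  by (rule bigoI[where c="\<bar>c\<bar>"]) (simp add: abs_mult)

lemma const_bo: "(\<lambda>h::real. c) \<in> O[F](\<lambda>h. h^0)"
  by (rule bigoI[where c="\<bar>c\<bar>"]) simp

lemma bo_add: "f \<in> O[F](g) \<Longrightarrow> f' \<in> O[F](g) \<Longrightarrow> (\<lambda>x. f x + f' x) \<in> O[F](g)"
  by (rule sum_in_bigo)
lemma bo_diff: "f \<in> O[F](g) \<Longrightarrow> f' \<in> O[F](g) \<Longrightarrow> (\<lambda>x. f x - f' x) \<in> O[F](g)"
  by (rule sum_in_bigo)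

lemma div_h:
  assumes "f \<in> O[at_right 0](\<lambda>h::real. h^(Suc n))"
  shows "(\<lambda>h. f h / h) \<in> O[at_right 0](\<lambda>h. h^n)"
proof -
  from landau_o.bigE[OF assms] obtain c where c: "c > 0"
    "eventually (\<lambda>h. norm (f h) \<le> c * norm (h^Suc n)) (at_right 0)" by blast
  show ?thesis
  proof (rule bigoI[where c=c])
    show "\<forall>\<^sub>F x in at_right 0. norm (f x / x) \<le> c * norm (x ^ n)"
      using c(2) ev_small
    proof eventually_elim
      case (elim h)
      then have "\<bar>f h\<bar> \<le> c * h^n * h" by (simp add: abs_mult power_abs mult_ac)
      then have "\<bar>f h\<bar> / h \<le> c * h^n" using elim by (simp add: divide_le_eq)
      then show ?case using elim by (simp add: abs_mult power_abs)
    qed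
  qed
qed

lemma dis_lemma:
  fixes A B P R :: "real \<Rightarrow> real"
  assumes hA: "(\<lambda>h. A h - (a0 + a1*h)) \<in> O[at_right 0](\<lambda>h. h^2)"
    and hB: "(\<lambda>h. B h - (a0 - a1*h)) \<in> O[at_right 0](\<lambda>h. h^2)"
    and hP: "(\<lambda>h. P h - (c5*h^5 + c6*h^6)) \<in> O[at_right 0](\<lambda>h. h^7)"
    and hR: "(\<lambda>h. R h - (c5*h^5 - c6*h^6)) \<in> O[at_right 0](\<lambda>h. h^7)"
  shows "(\<lambda>h. (A h * P h - B h * R h) - 2*(a0*c6 + a1*c5)*h^6) \<in> O[at_right 0](\<lambda>h. h^7)"
proof -
  define eA where "eA h = A h - (a0 + a1*h)" for h
  define eB where "eB h = B h - (a0 - a1*h)" for h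
  define eP where "eP h = P h - (c5*h^5 + c6*h^6)" for h
  define eR where "eR h = R h - (c5*h^5 - c6*h^6)" for h
  have id: "(A h * P h - B h * R h) - 2*(a0*c6 + a1*c5)*h^6 =
     ((a0 + a1*h) * eP h + eA h * (c5*h^5 + c6*h^6) + eA h * eP h)
    - ((a0 - a1*h) * eR h + eB h * (c5*h^5 - c6*h^6) + eB h * eR h)" for h
    unfolding eA_def eB_def eP_def eR_def by algebra
  have A: "eA \<in> O[at_right 0](\<lambda>h. h^2)" using hA unfolding eA_def[abs_def] .
  have B: "eB \<in> O[at_right 0](\<lambda>h. h^2)" using hB unfolding eB_def[abs_def] .
  have P: "eP \<in> O[at_right 0](\<lambda>h. h^7)" using hP unfolding eP_def[abs_def] .
  have R: "eR \<in> O[at_right 0](\<lambda>h. h^7)" using hR unfolding eR_def[abs_def] .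
  have lh: "(\<lambda>h. a1*h) \<in> O[at_right 0](\<lambda>h. h^0)"
    using bo_mono[OF mono_bo[of a1 1], of 0] by simp
  have l0: "(\<lambda>h. a0 + a1*h) \<in> O[at_right 0](\<lambda>h. h^0)"
    by (intro bo_add const_bo lh)
  have l0': "(\<lambda>h. a0 - a1*h) \<in> O[at_right 0](\<lambda>h. h^0)"
    by (intro bo_diff const_bo lh)
  have l5: "(\<lambda>h. c5*h^5 + c6*h^6) \<in> O[at_right 0](\<lambda>h. h^5)"
    by (intro bo_add mono_bo bo_mono[OF mono_bo]) auto
  have l5': "(\<lambda>h. c5*h^5 - c6*h^6) \<in> O[at_right 0](\<lambda>h. h^5)"
    by (intro bo_diff mono_bo bo_mono[OF mono_bo]) auto
  have t1: "(\<lambda>h. (a0 + a1*h) * eP h) \<in> O[at_right 0](\<lambda>h. h^7)"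
    using bo_mult[OF l0 P] by simp
  have t1': "(\<lambda>h. (a0 - a1*h) * eR h) \<in> O[at_right 0](\<lambda>h. h^7)"
    using bo_mult[OF l0' R] by simp
  have t2: "(\<lambda>h. eA h * (c5*h^5 + c6*h^6)) \<in> O[at_right 0](\<lambda>h. h^7)"
    using bo_mult[OF A l5] by simp
  have t2': "(\<lambda>h. eB h * (c5*h^5 - c6*h^6)) \<in> O[at_right 0](\<lambda>h. h^7)"
    using bo_mult[OF B l5'] by simp
  have t3: "(\<lambda>h. eA h * eP h) \<in> O[at_right 0](\<lambda>h. h^7)"
    using bo_mono[OF bo_mult[OF A P]] by simp
  have t3': "(\<lambda>h. eB h * eR h) \<in> O[at_right 0](\<lambda>h. h^7)"
    using bo_mono[OF bo_mult[OF B R]] by simp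
  show ?thesis unfolding id
    by (intro bo_add bo_diff t1 t2 t3 t1' t2' t3')
qed


lemma comp2:
  fixes F :: "real \<times> real \<Rightarrow> real"
  assumes F: "\<And>p. (F has_derivative (\<lambda>v. fst v * a p + snd v * b p)) (at p)"
    and al: "(\<alpha> has_real_derivative da) (at t)" and be: "(\<beta> has_real_derivative db) (at t)"
  shows "((\<lambda>t. F (\<alpha> t, \<beta> t)) has_real_derivative (da * a (\<alpha> t, \<beta> t) + db * b (\<alpha> t, \<beta> t))) (at t)"
proof -
  have c: "((\<lambda>t. (\<alpha> t, \<beta> t)) has_derivative (\<lambda>s. (da * s, db * s))) (at t)"
    using has_derivative_Pair[OF al[unfolded has_field_derivative_def] be[unfolded has_field_derivative_def]]
    by (simp add: mult.commute)
  have "((\<lambda>t. F (\<alpha> t, \<beta> t)) has_derivative (\<lambda>s. fst (da * s, db * s) * a (\<alpha> t, \<beta> t) + snd (da * s, db * s) * b (\<alpha> t, \<beta> t))) (at t)"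
    by (rule has_derivative_compose[OF c F])
  then show ?thesis unfolding has_field_derivative_def
    by (rule has_derivative_eq_rhs) (auto simp: algebra_simps)
qed

lemma taylor2:
  fixes \<psi> \<psi>' :: "real \<Rightarrow> real"
  assumes d: "\<And>t. (\<psi> has_real_derivative \<psi>' t) (at t)"
    and d2: "(\<psi>' has_real_derivative L) (at 0)"
  shows "(\<lambda>h. \<psi> h - (\<psi> 0 + \<psi>' 0 * h)) \<in> O[at_right 0](\<lambda>h. h^2)"
    and "(\<lambda>h. \<psi> (-h) - (\<psi> 0 - \<psi>' 0 * h)) \<in> O[at_right 0](\<lambda>h. h^2)"
proof -
  have "((\<lambda>h. (\<psi>' (0 + h) - \<psi>' 0) / h) \<longlongrightarrow> L) (at 0)"
    using DERIV_D[OF d2] .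
  from tendstoD[OF this zero_less_one]
  obtain d where d0: "d > 0" and dd: "\<And>\<xi>. \<xi> \<noteq> 0 \<Longrightarrow> dist \<xi> 0 < d \<Longrightarrow> dist ((\<psi>' (0 + \<xi>) - \<psi>' 0) / \<xi>) L < 1"
    unfolding eventually_at by blast
  have lip: "\<bar>\<psi>' \<xi> - \<psi>' 0\<bar> \<le> (\<bar>L\<bar> + 1) * \<bar>\<xi>\<bar>" if "\<bar>\<xi>\<bar> < d" for \<xi>
  proof (cases "\<xi> = 0")
    case True then show ?thesis by simp
  next
    case False
    then have "\<bar>(\<psi>' \<xi> - \<psi>' 0) / \<xi> - L\<bar> < 1" using dd[of \<xi>] that by (simp add: dist_real_def)
    then have "\<bar>(\<psi>' \<xi> - \<psi>' 0) / \<xi>\<bar> \<le> \<bar>L\<bar> + 1" by linarith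
    then have "\<bar>\<psi>' \<xi> - \<psi>' 0\<bar> / \<bar>\<xi>\<bar> \<le> \<bar>L\<bar> + 1" by (simp add: abs_divide)
    then show ?thesis using False by (simp add: divide_le_eq)
  qed
  have ev: "eventually (\<lambda>h. 0 < h \<and> h < d) (at_right (0::real))"
    unfolding eventually_at_right[OF d0] by (rule exI[of _ d]) (auto simp: d0)
  show "(\<lambda>h. \<psi> h - (\<psi> 0 + \<psi>' 0 * h)) \<in> O[at_right 0](\<lambda>h. h^2)"
  proof (rule bigoI[where c="\<bar>L\<bar> + 1"])
    show "\<forall>\<^sub>F h in at_right 0. norm (\<psi> h - (\<psi> 0 + \<psi>' 0 * h)) \<le> (\<bar>L\<bar> + 1) * norm (h^2)"
      using ev
    proof eventually_elim
      case (elim h)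
      obtain z where z: "0 < z" "z < h" and eq: "\<psi> h - \<psi> 0 = (h - 0) * \<psi>' z"
        using MVT2[of 0 h \<psi> \<psi>'] elim d by auto
      have "\<psi> h - (\<psi> 0 + \<psi>' 0 * h) = h * (\<psi>' z - \<psi>' 0)" using eq by (simp add: algebra_simps)
      also have "\<bar>\<dots>\<bar> \<le> h * ((\<bar>L\<bar> + 1) * h)"
        using lip[of z] z elim by (simp add: abs_mult) (intro mult_left_mono order.trans[OF lip[of z]] mult_left_mono, auto)
      finally show ?case by (simp add: power2_eq_square mult_ac)
    qed
  qed
  show "(\<lambda>h. \<psi> (-h) - (\<psi> 0 - \<psi>' 0 * h)) \<in> O[at_right 0](\<lambda>h. h^2)"
  proof (rule bigoI[where c="\<bar>L\<bar> + 1"])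
    show "\<forall>\<^sub>F h in at_right 0. norm (\<psi> (-h) - (\<psi> 0 - \<psi>' 0 * h)) \<le> (\<bar>L\<bar> + 1) * norm (h^2)"
      using ev
    proof eventually_elim
      case (elim h)
      obtain z where z: "-h < z" "z < 0" and eq: "\<psi> 0 - \<psi> (-h) = (0 - (-h)) * \<psi>' z"
        using MVT2[of "-h" 0 \<psi> \<psi>'] elim d by auto
      have "\<psi> (-h) - (\<psi> 0 - \<psi>' 0 * h) = - h * (\<psi>' z - \<psi>' 0)" using eq by (simp add: algebra_simps)
      also have "\<bar>\<dots>\<bar> \<le> h * ((\<bar>L\<bar> + 1) * h)"
        using lip[of z] z elim by (simp add: abs_mult) (intro mult_left_mono order.trans[OF lip[of z]] mult_left_mono, auto)
      finally show ?case by (simp add: power2_eq_square mult_ac)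
    qed
  qed
qed


lemma psi_lemma:
  fixes u D :: "real \<Rightarrow> real" and Dbar :: "real \<Rightarrow> real \<Rightarrow> real"
  assumes su: "smooth1 u" and sD: "smooth1 D" and s2: "smooth2 Dbar"
    and sym: "\<And>a b. Dbar a b = Dbar b a" and diag: "\<And>v. Dbar v v = D v"
  shows "\<exists>\<psi>1. 2 * \<psi>1 = deriv (\<lambda>y. D (u y)) x
     \<and> (\<lambda>h. Dbar (u x) (u (x + h)) - (D (u x) + \<psi>1 * h)) \<in> O[at_right 0](\<lambda>h. h^2)
     \<and> (\<lambda>h. Dbar (u (x - h)) (u x) - (D (u x) - \<psi>1 * h)) \<in> O[at_right 0](\<lambda>h. h^2)"
proof -
  define Dp where "Dp p = Dbar (fst p) (snd p)" for p :: "real \<times> real"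
  have "Ck2 (Suc (Suc 0)) Dp" using s2 unfolding smooth2_def Dp_def by blast
  then obtain g1 g2 where dD: "\<And>p. (Dp has_derivative (\<lambda>v. fst v * g1 p + snd v * g2 p)) (at p)"
    and c2: "Ck2 (Suc 0) g2" by auto
  then obtain k1 k2 where dg2: "\<And>p. (g2 has_derivative (\<lambda>v. fst v * k1 p + snd v * k2 p)) (at p)"
    by auto
  have du: "(u has_real_derivative deriv u t) (at t)" for t
    using smooth1_D[OF su, of 0 t] by simp
  have ddu: "(deriv u has_real_derivative (deriv^^2) u t) (at t)" for t
    using smooth1_D[OF su, of 1 t] by (simp add: numeral_2_eq_2)
  have lin: "((\<lambda>t. x + t) has_real_derivative 1) (at t)" for t
    by (auto intro!: derivative_eq_intros)
  have dush: "((\<lambda>t. u (x + t)) has_real_derivative deriv u (x + t)) (at t)" for t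
    using DERIV_chain2[where f=u and g="\<lambda>t. x + t", OF du lin] by simp
  have ddush: "((\<lambda>t. deriv u (x + t)) has_real_derivative (deriv^^2) u (x + t)) (at t)" for t
    using DERIV_chain2[where f="deriv u" and g="\<lambda>t. x + t", OF ddu lin] by simp
  have cst: "((\<lambda>t. u x) has_real_derivative 0) (at t)" for t by simp
  define \<psi> where "\<psi> t = Dp (u x, u (x + t))" for t
  define \<psi>' where "\<psi>' t = g2 (u x, u (x + t)) * deriv u (x + t)" for t
  have dpsi: "(\<psi> has_real_derivative \<psi>' t) (at t)" for t
    using comp2[OF dD cst dush, of t] unfolding \<psi>_def[abs_def] \<psi>'_def by (simp add: mult.commute)
  have dg: "((\<lambda>t. g2 (u x, u (x + t))) has_real_derivative deriv u (x + 0) * k2 (u x, u (x + 0))) (at 0)"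
    using comp2[OF dg2 cst dush, of 0] by simp
  have "\<exists>L. (\<psi>' has_real_derivative L) (at 0)"
    using DERIV_mult[OF dg ddush] unfolding \<psi>'_def[abs_def] by blast
  then obtain L where dpsi': "(\<psi>' has_real_derivative L) (at 0)" by blast
  note T = taylor2[OF dpsi dpsi']
  have p0: "\<psi> 0 = D (u x)" unfolding \<psi>_def Dp_def by (simp add: diag)
  have pm: "\<psi> (-h) = Dbar (u (x - h)) (u x)" for h unfolding \<psi>_def Dp_def by (simp add: sym)
  have pp: "\<psi> h = Dbar (u x) (u (x + h))" for h unfolding \<psi>_def Dp_def by simp
  have "((\<lambda>t. Dp (u (x + t), u x)) has_real_derivative deriv u (x + 0) * g1 (u (x + 0), u x) + 0 * g2 (u (x + 0), u x)) (at 0)"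
    by (rule comp2[OF dD dush cst])
  moreover have "(\<lambda>t. Dp (u (x + t), u x)) = \<psi>" unfolding \<psi>_def[abs_def] Dp_def by (simp add: sym)
  ultimately have e1: "deriv u x * g1 (u x, u x) = \<psi>' 0"
    using DERIV_unique[OF _ dpsi[of 0]] by simp
  have "((\<lambda>t. Dp (u (x + t), u (x + t))) has_real_derivative deriv u (x + 0) * g1 (u (x + 0), u (x + 0)) + deriv u (x + 0) * g2 (u (x + 0), u (x + 0))) (at 0)"
    by (rule comp2[OF dD dush dush])
  then have c1: "((\<lambda>t. D (u (x + t))) has_real_derivative 2 * \<psi>' 0) (at 0)"
    using e1 unfolding Dp_def \<psi>'_def by (simp add: diag mult.commute)
  have dD0: "(D has_real_derivative deriv D y) (at y)" for y using smooth1_D[OF sD, of 0 y] by simp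
  have dDu: "((\<lambda>y. D (u y)) has_real_derivative deriv D (u x) * deriv u x) (at x)"
    using DERIV_chain2[where f=D and g=u, OF dD0 du[of x]] by simp
  have "((\<lambda>t. D (u (x + t))) has_real_derivative deriv D (u x) * deriv u x) (at 0)"
    using DERIV_chain2[where f=D and g="\<lambda>t. u (x + t)", OF dD0 dush[of 0]] by simp
  with c1 have "2 * \<psi>' 0 = deriv D (u x) * deriv u x" by (rule DERIV_unique)
  also have "\<dots> = deriv (\<lambda>y. D (u y)) x" using DERIV_imp_deriv[OF dDu] by simp
  finally show ?thesis using T unfolding p0 unfolding pm unfolding pp by blast
qed


lemma bo_cmult: "f \<in> O[F](g) \<Longrightarrow> (\<lambda>x. c * f x) \<in> O[F](g)"
  by (cases "c = 0") auto

lemma flux_bo: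
  assumes sG: "smooth1 G"
  shows "(\<lambda>h. (\<theta>3*(-1/32)*(G (x + 3*h) - G (x + (-3)*h))
    + (\<theta>+\<theta>3-1)/8*(G (x + 2*h) - G (x + (-2)*h))
    + (3/4 - \<theta>/4 - 5*\<theta>3/32)*(G (x + 1*h) - G (x + (-1)*h)))
    - h * ((deriv^^1) G x + (3 * \<theta> - 1) / 12 * (deriv ^^ 3) G x * h ^ 2
              + (15 * (\<theta> - \<theta>3) - 13) / 240 * (deriv ^^ 5) G x * h ^ 4))
    \<in> O[at_right 0](\<lambda>h. h^7)"
proof -
  define r where "r a h = G (x + a*h) - tay G x 7 (a*h)" for a h
  have r: "r a \<in> O[at_right 0](\<lambda>h. h^7)" for a
    unfolding r_def[abs_def] by (rule taylor_bigo[OF sG])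
  have id: "(\<theta>3*(-1/32)*(G (x + 3*h) - G (x + (-3)*h))
    + (\<theta>+\<theta>3-1)/8*(G (x + 2*h) - G (x + (-2)*h))
    + (3/4 - \<theta>/4 - 5*\<theta>3/32)*(G (x + 1*h) - G (x + (-1)*h)))
    - h * ((deriv^^1) G x + (3 * \<theta> - 1) / 12 * (deriv ^^ 3) G x * h ^ 2
              + (15 * (\<theta> - \<theta>3) - 13) / 240 * (deriv ^^ 5) G x * h ^ 4)
    = \<theta>3*(-1/32)*(r 3 h - r (-3) h) + (\<theta>+\<theta>3-1)/8*(r 2 h - r (-2) h)
      + (3/4 - \<theta>/4 - 5*\<theta>3/32)*(r 1 h - r (-1) h)" for h
    unfolding r_def tay7 by (simp add: field_simps) algebra
  show ?thesis unfolding id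
    by (intro bo_add bo_diff bo_cmult r)
qed


lemma Q0_bo:
  assumes su: "smooth1 u"
  shows "(\<lambda>h. (1-\<kappa>)*(-u (x + (-2)*h)/16 + 5*u (x + (-1)*h)/16 - 5*u (x + 0*h)/8
        + 5*u (x + 1*h)/8 - 5*u (x + 2*h)/16 + u (x + 3*h)/16)
     - ((1-\<kappa>)*(deriv^^5) u x/16*h^5 + (1-\<kappa>)*(deriv^^6) u x/32*h^6)) \<in> O[at_right 0](\<lambda>h. h^7)"
proof -
  define r where "r a h = u (x + a*h) - tay u x 7 (a*h)" for a h
  have r: "r a \<in> O[at_right 0](\<lambda>h. h^7)" for a
    unfolding r_def[abs_def] by (rule taylor_bigo[OF su])
  have id: "(1-\<kappa>)*(-u (x + (-2)*h)/16 + 5*u (x + (-1)*h)/16 - 5*u (x + 0*h)/8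
        + 5*u (x + 1*h)/8 - 5*u (x + 2*h)/16 + u (x + 3*h)/16)
     - ((1-\<kappa>)*(deriv^^5) u x/16*h^5 + (1-\<kappa>)*(deriv^^6) u x/32*h^6)
    = (1-\<kappa>)*(-r (-2) h/16 + 5*r (-1) h/16 - 5*r 0 h/8 + 5*r 1 h/8 - 5*r 2 h/16 + r 3 h/16)" for h
    unfolding r_def tay7 by (simp add: field_simps)
  show ?thesis unfolding id
    by (intro bo_add bo_diff bo_cmult r landau_o.big.cdiv_in_iff'[THEN iffD2]) (auto intro: r)
qed

lemma Q1_bo:
  assumes su: "smooth1 u"
  shows "(\<lambda>h. (1-\<kappa>)*(-u (x + (-3)*h)/16 + 5*u (x + (-2)*h)/16 - 5*u (x + (-1)*h)/8
        + 5*u (x + 0*h)/8 - 5*u (x + 1*h)/16 + u (x + 2*h)/16)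
     - ((1-\<kappa>)*(deriv^^5) u x/16*h^5 - (1-\<kappa>)*(deriv^^6) u x/32*h^6)) \<in> O[at_right 0](\<lambda>h. h^7)"
proof -
  define r where "r a h = u (x + a*h) - tay u x 7 (a*h)" for a h
  have r: "r a \<in> O[at_right 0](\<lambda>h. h^7)" for a
    unfolding r_def[abs_def] by (rule taylor_bigo[OF su])
  have id: "(1-\<kappa>)*(-u (x + (-3)*h)/16 + 5*u (x + (-2)*h)/16 - 5*u (x + (-1)*h)/8
        + 5*u (x + 0*h)/8 - 5*u (x + 1*h)/16 + u (x + 2*h)/16)
     - ((1-\<kappa>)*(deriv^^5) u x/16*h^5 - (1-\<kappa>)*(deriv^^6) u x/32*h^6)
    = (1-\<kappa>)*(-r (-3) h/16 + 5*r (-2) h/16 - 5*r (-1) h/8 + 5*r 0 h/8 - 5*r 1 h/16 + r 2 h/16)" for h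
    unfolding r_def tay7 by (simp add: field_simps)
  show ?thesis unfolding id
    by (intro bo_add bo_diff bo_cmult r landau_o.big.cdiv_in_iff'[THEN iffD2]) (auto intro: r)
qed


lemma main_id:
  fixes h FL X P a0 a1 c5 c6 :: real
  assumes "h \<noteq> 0"
  shows "(FL - h*P)/h - 1/2*((X - 2*(a0*c6 + a1*c5)*h^6)/h) = FL/h - X/(2*h) - (P + (-(a0*c6 + a1*c5))*h^5)"
  using assms by (simp add: field_simps) algebra

lemma div_h7: "f \<in> O[at_right 0](\<lambda>h::real. h^7) \<Longrightarrow> (\<lambda>h. f h / h) \<in> O[at_right 0](\<lambda>h. h^6)"
  using div_h[of f 6] by (simp add: numeral_eq_Suc)

theorem mainTheorem4:
  fixes u f D :: "real \<Rightarrow> real" and Dbar :: "real \<Rightarrow> real \<Rightarrow> real"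
    and \<kappa> \<kappa>3 \<theta> \<theta>3 x :: real
  assumes "smooth1 u" and "smooth1 f" and "smooth1 D" and "smooth2 Dbar"
    and "\<And>a b. Dbar a b = Dbar b a" and "\<And>v. Dbar v v = D v"
    and "\<kappa>3 = \<kappa> - 1"
  shows "(\<lambda>h. schemeE \<kappa> \<kappa>3 \<theta> \<theta>3 f Dbar u x h
            - ( deriv (\<lambda>y. f (u y)) x
              + (3 * \<theta> - 1) / 12 * (deriv ^^ 3) (\<lambda>y. f (u y)) x * h ^ 2
              + (15 * (\<theta> - \<theta>3) - 13) / 240 * (deriv ^^ 5) (\<lambda>y. f (u y)) x * h ^ 4
              + (\<kappa> - 1) / 32 * (deriv (\<lambda>y. D (u y)) x * (deriv ^^ 5) u x
                                 + D (u x) * (deriv ^^ 6) u x) * h ^ 5))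
          \<in> O[at_right 0](\<lambda>h. h ^ 6)
     \<and> (\<theta> = 1/3 \<and> \<theta>3 = -8/15 \<longrightarrow>
          (\<lambda>h. schemeE \<kappa> \<kappa>3 \<theta> \<theta>3 f Dbar u x h - deriv (\<lambda>y. f (u y)) x)
            \<in> O[at_right 0](\<lambda>h. h ^ 5))
     \<and> (\<theta> = 1/3 \<and> \<theta>3 = -8/15 \<and> (\<forall>v. D v = 0) \<longrightarrow>
          (\<lambda>h. schemeE \<kappa> \<kappa>3 \<theta> \<theta>3 f Dbar u x h - deriv (\<lambda>y. f (u y)) x)
            \<in> O[at_right 0](\<lambda>h. h ^ 6))"
proof -
  note su = assms(1) and sf = assms(2) and sD = assms(3) and s2 = assms(4)
  define G where "G = (\<lambda>y. f (u y))"
  have sG: "smooth1 G" unfolding G_def by (rule smooth1_comp[OF sf su])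
  obtain \<psi>1 where p2: "2 * \<psi>1 = deriv (\<lambda>y. D (u y)) x"
    and hA: "(\<lambda>h. Dbar (u x) (u (x + h)) - (D (u x) + \<psi>1 * h)) \<in> O[at_right 0](\<lambda>h. h^2)"
    and hB: "(\<lambda>h. Dbar (u (x - h)) (u x) - (D (u x) - \<psi>1 * h)) \<in> O[at_right 0](\<lambda>h. h^2)"
    using psi_lemma[OF su sD s2 assms(5,6)] by blast
  note dis = div_h7[OF dis_lemma[OF hA hB Q0_bo[OF su, of \<kappa> x] Q1_bo[OF su, of \<kappa> x]]]
  note fl = div_h7[OF flux_bo[OF sG, of \<theta>3 x \<theta>]]
  define Tg where "Tg h = deriv G x
              + (3 * \<theta> - 1) / 12 * (deriv ^^ 3) G x * h ^ 2
              + (15 * (\<theta> - \<theta>3) - 13) / 240 * (deriv ^^ 5) G x * h ^ 4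
              + (\<kappa> - 1) / 32 * (deriv (\<lambda>y. D (u y)) x * (deriv ^^ 5) u x
                                 + D (u x) * (deriv ^^ 6) u x) * h ^ 5" for h
  have main: "(\<lambda>h. schemeE \<kappa> \<kappa>3 \<theta> \<theta>3 f Dbar u x h - Tg h) \<in> O[at_right 0](\<lambda>h. h ^ 6)"
  proof -
    have "(\<lambda>h. X1 h - 1/2 * X2 h) \<in> O[at_right 0](\<lambda>h. h ^ 6)"
      if "X1 \<in> O[at_right 0](\<lambda>h. h ^ 6)" "X2 \<in> O[at_right 0](\<lambda>h. h ^ 6)" for X1 X2 :: "real \<Rightarrow> real"
      using that by (intro bo_diff bo_cmult)
    note comb = this[OF fl dis]
    show ?thesis
      apply (rule landau_o.big.in_cong[THEN iffD1, OF _ comb])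
      apply (rule eventually_mono[OF ev_small])
      apply (unfold assms(7) Tg_def G_def)
      apply (subst schemeE_eq, simp)
      apply (subst main_id, simp)
      apply (unfold p2[symmetric])
      apply (simp add: algebra_simps)
      apply (simp add: field_simps)
      done
  qed
  have c2: "(\<lambda>h. schemeE \<kappa> \<kappa>3 \<theta> \<theta>3 f Dbar u x h - deriv G x) \<in> O[at_right 0](\<lambda>h. h ^ 5)"
    if th: "\<theta> = 1/3" "\<theta>3 = -8/15"
  proof -
    define c where "c = (\<kappa> - 1) / 32 * (deriv (\<lambda>y. D (u y)) x * (deriv ^^ 5) u x + D (u x) * (deriv ^^ 6) u x)"
    have eq: "(\<lambda>h. schemeE \<kappa> \<kappa>3 \<theta> \<theta>3 f Dbar u x h - deriv G x) = (\<lambda>h. (schemeE \<kappa> \<kappa>3 \<theta> \<theta>3 f Dbar u x h - Tg h) + c * h^5)"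
      by (rule ext) (simp add: Tg_def c_def th)
    show ?thesis unfolding eq by (intro bo_add bo_mono[OF main] mono_bo) simp
  qed
  have c3: "(\<lambda>h. schemeE \<kappa> \<kappa>3 \<theta> \<theta>3 f Dbar u x h - deriv G x) \<in> O[at_right 0](\<lambda>h. h ^ 6)"
    if th: "\<theta> = 1/3" "\<theta>3 = -8/15" and D0: "\<forall>v. D v = 0"
  proof -
    have "(\<lambda>y. D (u y)) = (\<lambda>y. 0)" using D0 by auto
    then have "Tg h = deriv G x" for h unfolding Tg_def th using D0 by simp
    then show ?thesis using main by simp
  qed
  show ?thesis using main c2 c3 unfolding Tg_def G_def by blast

qed

end
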